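(* Let $A$ be an $n\times n$ Bott matrix. Then the seal space $Q^n_{\mathcal{F}_A}$ is homeomorphic to $M(A)=\mathbb{R}^n/\Gamma(A)$.
   Context: $\mathcal{C}^n=\{x\in\mathbb{R}^n: -\tfrac14\le x_i\le\tfrac14\}$; for $j\in\{\pm1,\dots,\pm n\}$, $\mathbf{F}(i)$, $\mathbf{F}(-i)$ ($1\le i\le n$) are the facets in $\{x_i=\tfrac14\}$, $\{x_i=-\tfrac14\}$. A binary matrix has entries in $\mathbb{Z}_2$; $A^i_k$ denotes the $(i,k)$ entry viewed as $0$ or $1$. A Bott matrix is a binary square matrix conjugate by a permutation matrix to a strictly upper triangular binary matrix (in particular it has zero diagonal). For a binary $n\times n$ matrix $A$ with zero diagonal: $\mathcal{F}_A$ is the facets-pairing structure pairing $\mathbf{F}(j)$ with $\mathbf{F}(-j)$ via $\tau^A_j:\mathbf{F}(j)\to\mathbf{F}(-j)$, $\tau^A_j(x)=y$ with $y_{|j|}=-x_{|j|}$ and $y_k=(-1)^{A^{|j|}_k}x_k$ for $k\ne|j|$. The seal space $Q^n_{\mathcal{F}_A}$ is the quotient of $\mathcal{C}^n$ by the equivalence relation generated by $x\sim\tau^A_j(x)$ ($x\in\mathbf{F}(j)$). $\Gamma(A)$ is the subgroup of $\mathrm{Isom}(\mathbb{R}^n)$ generated by $s_1,\dots,s_n$, where $s_i(x)=y$ with $y_i=x_i+\tfrac12$ and $y_k=(-1)^{A^i_k}x_k$ for $k\ne i$. *)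

theory Defs
  imports "HOL-Analysis.Analysis"
begin

definition quotient_topology :: "'a topology \<Rightarrow> ('a \<times> 'a) set \<Rightarrow> 'a set topology" where
  "quotient_topology X r =
     topology (\<lambda>U. U \<subseteq> topspace X // r \<and> openin X {x \<in> topspace X. r``{x} \<in> U})"

text \<open>Binary matrices: entries in Z_2 are encoded as bool (True = 1).
Indices range over a finite type 'n, so the matrix is n x n with n = CARD('n).\<close>

text \<open>Bott matrix: conjugate by a permutation matrix to a strictly upper triangular
binary matrix, i.e. there is an enumeration of the indices by 0..n-1 such that every
nonzero entry (i,k) satisfies sigma i < sigma k.\<close>
definition bott_matrix :: "('n::finite \<Rightarrow> 'n \<Rightarrow> bool) \<Rightarrow> bool" where
  "bott_matrix A \<longleftrightarrow> (\<exists>\<sigma> :: 'n \<Rightarrow> nat. bij_betw \<sigma> UNIV {..<CARD('n)} \<and>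
      (\<forall>i k. A i k \<longrightarrow> \<sigma> i < \<sigma> k))"

definition sgn01 :: "bool \<Rightarrow> real" where
  "sgn01 b = (if b then -1 else 1)"

definition cube :: "(real^'n) set" where
  "cube = {x. \<forall>i. -1/4 \<le> x$i \<and> x$i \<le> 1/4}"

text \<open>Facet F(i) (sign True) lies in x_i = 1/4, F(-i) (sign False) in x_i = -1/4.\<close>
definition facet :: "'n \<Rightarrow> bool \<Rightarrow> (real^'n) set" where
  "facet i pos = {x \<in> cube. x$i = (if pos then 1/4 else -1/4)}"

text \<open>tau^A_j, which depends only on |j| = i.\<close>
definition tau :: "('n \<Rightarrow> 'n \<Rightarrow> bool) \<Rightarrow> 'n \<Rightarrow> real^'n \<Rightarrow> real^'n" where
  "tau A i x = (\<chi> k. if k = i then - x$i else sgn01 (A i k) * x$k)"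

definition seal_rel :: "('n \<Rightarrow> 'n \<Rightarrow> bool) \<Rightarrow> ((real^'n) \<times> (real^'n)) set" where
  "seal_rel A = (let R = {(x, tau A i x) | x i pos. x \<in> facet i pos}
                 in (R \<union> R\<inverse>)\<^sup>*)"

definition seal_space :: "('n \<Rightarrow> 'n \<Rightarrow> bool) \<Rightarrow> (real^'n) set topology" where
  "seal_space A = quotient_topology (subtopology euclidean cube) (seal_rel A)"

definition gen_s :: "('n \<Rightarrow> 'n \<Rightarrow> bool) \<Rightarrow> 'n \<Rightarrow> real^'n \<Rightarrow> real^'n" where
  "gen_s A i x = (\<chi> k. if k = i then x$i + 1/2 else sgn01 (A i k) * x$k)"

inductive_set Gamma :: "('n \<Rightarrow> 'n \<Rightarrow> bool) \<Rightarrow> (real^'n \<Rightarrow> real^'n) set" for A where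
  Gamma_id: "id \<in> Gamma A"
| Gamma_gen: "g \<in> Gamma A \<Longrightarrow> gen_s A i \<circ> g \<in> Gamma A"
| Gamma_inv: "g \<in> Gamma A \<Longrightarrow> inv (gen_s A i) \<circ> g \<in> Gamma A"

definition orbit_rel :: "('n \<Rightarrow> 'n \<Rightarrow> bool) \<Rightarrow> ((real^'n) \<times> (real^'n)) set" where
  "orbit_rel A = {(x, g x) | x g. g \<in> Gamma A}"

definition M_space :: "('n \<Rightarrow> 'n \<Rightarrow> bool) \<Rightarrow> (real^'n) set topology" where
  "M_space A = quotient_topology euclidean (orbit_rel A)"

end

theory Submission
  imports Defs
begin

definition sinv :: "('n \<Rightarrow> 'n \<Rightarrow> bool) \<Rightarrow> 'n \<Rightarrow> real^'n \<Rightarrow> real^'n" where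
  "sinv A i x = (\<chi> k. if k = i then x$i - 1/2 else sgn01 (A i k) * x$k)"

lemma sgn01_sq: "sgn01 b * sgn01 b = 1" by (simp add: sgn01_def)
lemma abs_sgn01: "\<bar>sgn01 b\<bar> = 1" by (simp add: sgn01_def)

lemma s_sinv: "gen_s A i \<circ> sinv A i = id" "sinv A i \<circ> gen_s A i = id"
  by (auto simp: fun_eq_iff vec_eq_iff gen_s_def sinv_def mult.assoc[symmetric] sgn01_sq)

lemma inv_s: "inv (gen_s A i) = sinv A i"
  by (rule inv_unique_comp) (simp_all add: s_sinv)

lemma bij_s: "bij (gen_s A i)"
  using s_sinv by (metis bij_betw_def comp_eq_id_dest inj_on_inverseI o_bij)

lemma Gamma_comp: "g \<in> Gamma A \<Longrightarrow> h \<in> Gamma A \<Longrightarrow> g \<circ> h \<in> Gamma A"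
  by (induction g rule: Gamma.induct) (auto simp: o_assoc[symmetric] intro: Gamma.intros)

lemma Gamma_s: "gen_s A i \<in> Gamma A" "sinv A i \<in> Gamma A"
  using Gamma_gen[OF Gamma_id, of A i] Gamma_inv[OF Gamma_id, of A i] by (simp_all add: inv_s)

lemma bij_sinv: "bij (sinv A i)"
  using bij_imp_bij_inv[OF bij_s] by (simp add: inv_s)

lemma Gamma_bij: "g \<in> Gamma A \<Longrightarrow> bij g"
proof (induction g rule: Gamma.induct)
  case Gamma_id then show ?case by (rule bij_id)
next
  case (Gamma_gen g i) then show ?case by (intro bij_comp[of g "gen_s A i"]) (simp_all add: bij_s)
next
  case (Gamma_inv g i) then show ?case by (intro bij_comp[of g "inv (gen_s A i)"]) (simp_all add: bij_s bij_imp_bij_inv)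
qed

lemma Gamma_inv_closed: "g \<in> Gamma A \<Longrightarrow> inv g \<in> Gamma A"
proof (induction g rule: Gamma.induct)
  case Gamma_id then show ?case using Gamma.Gamma_id inv_id by metis
next
  case (Gamma_gen g i)
  have "inv (gen_s A i \<circ> g) = inv g \<circ> inv (gen_s A i)"
    by (rule o_inv_distrib[OF bij_s Gamma_bij[OF Gamma_gen(1)]])
  then show ?case using Gamma_comp[OF Gamma_gen(2) Gamma_s(2)] by (metis inv_s)
next
  case (Gamma_inv g i)
  have "inv (inv (gen_s A i) \<circ> g) = inv g \<circ> inv (inv (gen_s A i))"
    by (rule o_inv_distrib[OF bij_imp_bij_inv[OF bij_s] Gamma_bij[OF Gamma_inv(1)]])
  also have "inv (inv (gen_s A i)) = gen_s A i" by (rule inv_inv_eq[OF bij_s])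
  finally show ?case using Gamma_comp[OF Gamma_inv(2) Gamma_s(1)] by metis
qed

lemma orbit_sym: "(x,y) \<in> orbit_rel A \<Longrightarrow> (y,x) \<in> orbit_rel A"
proof -
  assume "(x,y) \<in> orbit_rel A"
  then obtain g where g: "g \<in> Gamma A" "y = g x" by (auto simp: orbit_rel_def)
  have "inv g y = x" using g Gamma_bij[OF g(1)] by (simp add: bij_is_inj)
  then show ?thesis using Gamma_inv_closed[OF g(1)] unfolding orbit_rel_def by blast
qed

lemma orbit_trans: "(x,y) \<in> orbit_rel A \<Longrightarrow> (y,z) \<in> orbit_rel A \<Longrightarrow> (x,z) \<in> orbit_rel A"
proof -
  assume "(x,y) \<in> orbit_rel A" "(y,z) \<in> orbit_rel A"
  then obtain g h where "g \<in> Gamma A" "y = g x" "h \<in> Gamma A" "z = h y" by (auto simp: orbit_rel_def)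
  then show ?thesis unfolding orbit_rel_def using Gamma_comp[of h A g] by (auto intro!: exI[of _ "h \<circ> g"])
qed

lemma orbit_refl: "(x,x) \<in> orbit_rel A"
proof -
  have "(x, id x) \<in> orbit_rel A" unfolding orbit_rel_def using Gamma_id by blast
  then show ?thesis by simp
qed

lemma orbit_apply: "g \<in> Gamma A \<Longrightarrow> (x, g x) \<in> orbit_rel A"
  unfolding orbit_rel_def by blast

lemma orbit_Image_eq: "(x,y) \<in> orbit_rel A \<Longrightarrow> orbit_rel A `` {x} = orbit_rel A `` {y}"
  by (auto intro: orbit_trans orbit_sym)

definition Efac :: "('n::finite \<Rightarrow> 'n \<Rightarrow> bool) \<Rightarrow> ('n \<Rightarrow> int) \<Rightarrow> 'n \<Rightarrow> real" where
  "Efac A n k = (\<Prod>i\<in>{i. odd (n i)}. sgn01 (A i k))"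

definition aff :: "('n::finite \<Rightarrow> 'n \<Rightarrow> bool) \<Rightarrow> ('n \<Rightarrow> int) \<Rightarrow> real^'n \<Rightarrow> real^'n" where
  "aff A n x = (\<chi> k. Efac A n k * x$k + of_int (n k) / 2)"

lemma prod_toggle:
  assumes "finite S" "f j * f j = (1::real)"
  shows "prod f (if j \<in> S then S - {j} else insert j S) = f j * prod f S"
proof (cases "j \<in> S")
  case True
  then have "prod f S = f j * prod f (S - {j})" using assms(1) by (simp add: prod.remove)
  then show ?thesis using True assms(2) by (simp add: mult.assoc[symmetric])
next
  case False then show ?thesis using assms(1) by simp
qed

lemma Efac_toggle:
  fixes n :: "'n::finite \<Rightarrow> int"
  assumes "\<forall>k. odd (n' k) = (if k = j then \<not> odd (n j) else odd (n k))"
  shows "Efac A n' k = sgn01 (A j k) * Efac A n k"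
proof -
  have "{i. odd (n' i)} = (if j \<in> {i. odd (n i)} then {i. odd (n i)} - {j} else insert j {i. odd (n i)})"
    using assms by auto
  then show ?thesis unfolding Efac_def
    by (simp only:) (rule prod_toggle, simp_all add: sgn01_sq)
qed

lemma abs_Efac: "\<bar>Efac A n k\<bar> = 1"
  unfolding Efac_def abs_prod by (simp add: abs_sgn01)

lemma Efac_cases: "Efac A n k = 1 \<or> Efac A n k = -1"
  using abs_Efac[of A n k] by (auto simp: abs_if split: if_splits)

lemma gen_aff:
  assumes "\<not> A j j"
  shows "gen_s A j \<circ> aff A n = aff A (\<lambda>k. if k = j then n j + 1 else if A j k then - n k else n k)"
    (is "_ = aff A ?n'")
proof -
  have E: "Efac A ?n' k = sgn01 (A j k) * Efac A n k" for k
    by (rule Efac_toggle) auto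
  show ?thesis
  proof (rule ext, subst vec_eq_iff, rule allI)
    fix x k
    show "(gen_s A j \<circ> aff A n) x $ k = aff A ?n' x $ k"
    proof (cases "k = j")
      case True
      have "(gen_s A j \<circ> aff A n) x $ k = Efac A n j * x$j + of_int (n j) / 2 + 1/2"
        using True by (simp add: gen_s_def aff_def)
      moreover have "aff A ?n' x $ k = Efac A ?n' j * x$j + of_int (n j + 1) / 2"
        using True by (simp add: aff_def)
      moreover have "Efac A ?n' j = Efac A n j" using E[of j] assms by (simp add: sgn01_def)
      ultimately show ?thesis by simp
    next
      case False
      have "(gen_s A j \<circ> aff A n) x $ k = sgn01 (A j k) * (Efac A n k * x$k + of_int (n k) / 2)"
        using False by (simp add: gen_s_def aff_def)
      moreover have "aff A ?n' x $ k = Efac A ?n' k * x$k + of_int (if A j k then - n k else n k) / 2"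
        using False by (simp add: aff_def)
      ultimately show ?thesis unfolding E by (simp add: sgn01_def algebra_simps)
    qed
  qed
qed

lemma sinv_aff:
  assumes "\<not> A j j"
  shows "sinv A j \<circ> aff A n = aff A (\<lambda>k. if k = j then n j - 1 else if A j k then - n k else n k)"
    (is "_ = aff A ?n'")
proof -
  have E: "Efac A ?n' k = sgn01 (A j k) * Efac A n k" for k
    by (rule Efac_toggle) auto
  show ?thesis
  proof (rule ext, subst vec_eq_iff, rule allI)
    fix x k
    show "(sinv A j \<circ> aff A n) x $ k = aff A ?n' x $ k"
    proof (cases "k = j")
      case True
      have "(sinv A j \<circ> aff A n) x $ k = Efac A n j * x$j + of_int (n j) / 2 - 1/2"
        using True by (simp add: sinv_def aff_def)
      moreover have "aff A ?n' x $ k = Efac A ?n' j * x$j + of_int (n j - 1) / 2"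
        using True by (simp add: aff_def)
      moreover have "Efac A ?n' j = Efac A n j" using E[of j] assms by (simp add: sgn01_def)
      ultimately show ?thesis by simp
    next
      case False
      have "(sinv A j \<circ> aff A n) x $ k = sgn01 (A j k) * (Efac A n k * x$k + of_int (n k) / 2)"
        using False by (simp add: sinv_def aff_def)
      moreover have "aff A ?n' x $ k = Efac A ?n' k * x$k + of_int (if A j k then - n k else n k) / 2"
        using False by (simp add: aff_def)
      ultimately show ?thesis unfolding E by (simp add: sgn01_def algebra_simps)
    qed
  qed
qed

lemma aff_zero: "aff A (\<lambda>k. 0) = id"
  by (simp add: fun_eq_iff vec_eq_iff aff_def Efac_def)

lemma Gamma_form:
  assumes "\<forall>i. \<not> A i i" "g \<in> Gamma A"
  shows "\<exists>n. g = aff A n"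
  using assms(2)
proof (induction g rule: Gamma.induct)
  case Gamma_id then show ?case using aff_zero[of A] by (intro exI[of _ "\<lambda>k. 0"]) simp
next
  case (Gamma_gen g i)
  then obtain n where "g = aff A n" by blast
  then show ?case using gen_aff[of A i n] assms(1) by blast
next
  case (Gamma_inv g i)
  then obtain n where "g = aff A n" by blast
  then show ?case using sinv_aff[of A i n] assms(1) by (simp add: inv_s) blast
qed

lemma aff_abs: "\<bar>aff A n y $ k - aff A n z $ k\<bar> = \<bar>y$k - z$k\<bar>"
proof -
  have "aff A n y $ k - aff A n z $ k = Efac A n k * (y$k - z$k)"
    by (simp add: aff_def algebra_simps)
  then show ?thesis by (simp add: abs_mult abs_Efac)
qed

lemma aff_dist: "dist (aff A n y) (aff A n z) = dist y z"
  unfolding dist_vec_def dist_real_def aff_abs ..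

lemma bott_diag: "bott_matrix A \<Longrightarrow> \<not> A i i"
  unfolding bott_matrix_def by blast

lemma iter_s:
  assumes z: "\<forall>k. A i k \<longrightarrow> x$k = 0" and h: "h \<in> Gamma A" "h 0 = x"
  shows "\<exists>h'\<in>Gamma A. h' 0 = (\<chi> k. if k = i then x$i + of_nat N / 2 else x$k)"
proof (induction N)
  case 0 then show ?case using h by (auto intro!: bexI[of _ h] simp: vec_eq_iff)
next
  case (Suc N)
  then obtain h' where h': "h' \<in> Gamma A" "h' 0 = (\<chi> k. if k = i then x$i + of_nat N / 2 else x$k)" by blast
  have "gen_s A i \<circ> h' \<in> Gamma A" using h' Gamma_gen by blast
  moreover have "(gen_s A i \<circ> h') 0 = (\<chi> k. if k = i then x$i + of_nat (Suc N) / 2 else x$k)"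
  proof -
    have "((gen_s A i \<circ> h') 0) $ k = (\<chi> k. if k = i then x$i + of_nat (Suc N) / 2 else x$k) $ k" for k
    proof (cases "k = i")
      case True then show ?thesis using h'(2) by (simp add: gen_s_def add_divide_distrib diff_divide_distrib)
    next
      case False then show ?thesis using h'(2) z by (cases "A i k") (simp_all add: gen_s_def sgn01_def)
    qed
    then show ?thesis by (simp only: vec_eq_iff) blast
  qed
  ultimately show ?case by blast
qed

lemma iter_sinv:
  assumes z: "\<forall>k. A i k \<longrightarrow> x$k = 0" and h: "h \<in> Gamma A" "h 0 = x"
  shows "\<exists>h'\<in>Gamma A. h' 0 = (\<chi> k. if k = i then x$i - of_nat N / 2 else x$k)"
proof (induction N)
  case 0 then show ?case using h by (auto intro!: bexI[of _ h] simp: vec_eq_iff)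
next
  case (Suc N)
  then obtain h' where h': "h' \<in> Gamma A" "h' 0 = (\<chi> k. if k = i then x$i - of_nat N / 2 else x$k)" by blast
  have "sinv A i \<circ> h' \<in> Gamma A" using h' Gamma_inv[of h' A i] by (simp add: inv_s)
  moreover have "(sinv A i \<circ> h') 0 = (\<chi> k. if k = i then x$i - of_nat (Suc N) / 2 else x$k)"
  proof -
    have "((sinv A i \<circ> h') 0) $ k = (\<chi> k. if k = i then x$i - of_nat (Suc N) / 2 else x$k) $ k" for k
    proof (cases "k = i")
      case True then show ?thesis using h'(2) by (simp add: sinv_def add_divide_distrib diff_divide_distrib)
    next
      case False then show ?thesis using h'(2) z by (cases "A i k") (simp_all add: sinv_def sgn01_def)
    qed
    then show ?thesis by (simp only: vec_eq_iff) blast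
  qed
  ultimately show ?case by blast
qed

lemma iter_int:
  assumes z: "\<forall>k. A i k \<longrightarrow> x$k = 0" and h: "h \<in> Gamma A" "h 0 = x"
  shows "\<exists>h'\<in>Gamma A. h' 0 = (\<chi> k. if k = i then x$i + of_int m / 2 else x$k)"
proof (cases "m \<ge> 0")
  case True
  then have "of_int m = (of_nat (nat m) :: real)" by simp
  then show ?thesis using iter_s[OF assms, of "nat m"] by metis
next
  case False
  then have e: "x$i + of_int m / 2 = x$i - (of_nat (nat (- m)) :: real) / 2" by simp
  show ?thesis using iter_sinv[OF assms, of "nat (-m)"] by (simp only: e)
qed

lemma reach_from_zero:
  fixes A :: "'n::finite \<Rightarrow> 'n \<Rightarrow> bool"
  assumes "bott_matrix A"
  shows "\<exists>h\<in>Gamma A. h 0 = (\<chi> k. of_int (m k) / 2)"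
proof -
  obtain \<sigma> :: "'n \<Rightarrow> nat" where sb: "bij_betw \<sigma> UNIV {..<CARD('n)}" and so: "\<forall>i k. A i k \<longrightarrow> \<sigma> i < \<sigma> k"
    using assms unfolding bott_matrix_def by blast
  have "j \<le> CARD('n) \<Longrightarrow> \<exists>h\<in>Gamma A. h 0 = (\<chi> k. if \<sigma> k < j then of_int (m k) / 2 else 0)" for j
  proof (induction j)
    case 0
    have "id 0 = (\<chi> k. if \<sigma> k < 0 then of_int (m k) / 2 else (0::real))" by (simp add: vec_eq_iff)
    then show ?case using Gamma_id by blast
  next
    case (Suc j)
    then obtain h where h: "h \<in> Gamma A" "h 0 = (\<chi> k. if \<sigma> k < j then of_int (m k) / 2 else (0::real))"
      by auto
    from Suc(2) have "j \<in> {..<CARD('n)}" by simp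
    then obtain i where i: "\<sigma> i = j" using sb by (metis bij_betw_def imageE)
    let ?x = "(\<chi> k. if \<sigma> k < j then of_int (m k) / 2 else (0::real))"
    have z: "\<forall>k. A i k \<longrightarrow> ?x$k = 0"
    proof (intro allI impI)
      fix k assume "A i k"
      then have "\<sigma> i < \<sigma> k" using so by blast
      then show "?x$k = 0" using i by simp
    qed
    obtain h' where "h' \<in> Gamma A" "h' 0 = (\<chi> k. if k = i then ?x$i + of_int (m i) / 2 else ?x$k)"
      using iter_int[OF z h] by blast
    moreover have "(\<chi> k. if k = i then ?x$i + of_int (m i) / 2 else ?x$k)
       = (\<chi> k. if \<sigma> k < Suc j then of_int (m k) / 2 else (0::real))"
    proof -
      have inj: "k \<noteq> i \<Longrightarrow> \<sigma> k \<noteq> j" for k using bij_betw_imp_inj_on[OF sb] i by (metis injD)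
      have "(\<chi> k. if k = i then ?x$i + of_int (m i) / 2 else ?x$k) $ k
           = (\<chi> k. if \<sigma> k < Suc j then of_int (m k) / 2 else (0::real)) $ k" for k
      proof (cases "k = i")
        case True then show ?thesis using i by simp
      next
        case False then have "\<sigma> k \<noteq> j" by (rule inj)
        then show ?thesis using False by (simp add: less_Suc_eq)
      qed
      then show ?thesis by (simp only: vec_eq_iff) blast
    qed
    ultimately show ?case by metis
  qed
  from this[of "CARD('n)"] obtain h where "h \<in> Gamma A" "h 0 = (\<chi> k. if \<sigma> k < CARD('n) then of_int (m k) / 2 else (0::real))"
    by auto
  moreover have "\<sigma> k < CARD('n)" for k using sb by (auto simp: bij_betw_def)
  ultimately show ?thesis by auto
qed

lemma reach_zero:
  fixes A :: "'n::finite \<Rightarrow> 'n \<Rightarrow> bool"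
  assumes "bott_matrix A"
  shows "\<exists>g\<in>Gamma A. g (\<chi> k. of_int (m k) / 2) = 0"
proof -
  obtain h where h: "h \<in> Gamma A" "h 0 = (\<chi> k. of_int (m k) / 2)" using reach_from_zero[OF assms] by blast
  have "inv h (h 0) = 0" using Gamma_bij[OF h(1)] by (simp add: bij_is_inj)
  then show ?thesis using Gamma_inv_closed[OF h(1)] h(2) by metis
qed

lemma round_half: "\<exists>m::int. \<bar>(t::real) - of_int m / 2\<bar> \<le> 1/4"
proof -
  define m where "m = \<lfloor>2*t + 1/2\<rfloor>"
  have "of_int m \<le> 2*t + 1/2" "2*t + 1/2 < of_int m + 1" unfolding m_def by linarith+
  then show ?thesis by (intro exI[of _ m]) (simp add: abs_if)
qed

lemma into_cube:
  fixes A :: "'n::finite \<Rightarrow> 'n \<Rightarrow> bool"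
  assumes "bott_matrix A"
  shows "\<exists>g\<in>Gamma A. g x \<in> cube"
proof -
  have "\<forall>k. \<exists>m::int. \<bar>x$k - of_int m / 2\<bar> \<le> 1/4" using round_half by blast
  then obtain m where m: "\<And>k. \<bar>x$k - of_int (m k) / 2\<bar> \<le> 1/4" by metis
  obtain g where g: "g \<in> Gamma A" "g (\<chi> k. of_int (m k) / 2) = 0" using reach_zero[OF assms] by blast
  obtain n where n: "g = aff A n" using Gamma_form[OF _ g(1)] bott_diag[OF assms] by blast
  have "\<bar>g x $ k\<bar> \<le> 1/4" for k
    using aff_abs[of A n x k "(\<chi> k. of_int (m k) / 2)"] g(2) m[of k] n by simp
  then have "-1/4 \<le> g x $ k \<and> g x $ k \<le> 1/4" for k
    using abs_le_D1[of "g x $ k" "1/4"] abs_le_D2[of "g x $ k" "1/4"] by (simp add: divide_simps)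
  then have "g x \<in> cube" unfolding cube_def by blast
  then show ?thesis using g by blast
qed

definition sealR :: "('n::finite \<Rightarrow> 'n \<Rightarrow> bool) \<Rightarrow> ((real^'n) \<times> (real^'n)) set" where
  "sealR A = {(x, tau A i x) | x i pos. x \<in> facet i pos}"

lemma seal_rel_eq: "seal_rel A = (sealR A \<union> (sealR A)\<inverse>)\<^sup>*"
  unfolding seal_rel_def sealR_def Let_def ..

lemma tau_abs: "\<bar>tau A i x $ k\<bar> = \<bar>x $ k\<bar>"
  by (simp add: tau_def abs_mult abs_sgn01)

lemma in_cube_abs: "x \<in> cube \<longleftrightarrow> (\<forall>k. \<bar>x$k\<bar> \<le> 1/4)"
proof -
  have e: "(-1/4 \<le> t \<and> t \<le> 1/4) \<longleftrightarrow> \<bar>t\<bar> \<le> 1/4" for t :: real by arith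
  show ?thesis unfolding cube_def mem_Collect_eq e ..
qed

lemma tau_cube: "x \<in> cube \<Longrightarrow> tau A i x \<in> cube"
  by (simp add: in_cube_abs tau_abs)

lemma facet_cube: "x \<in> facet i pos \<Longrightarrow> x \<in> cube"
  by (simp add: facet_def)

lemma seal_cube: "(x,y) \<in> seal_rel A \<Longrightarrow> x \<in> cube \<Longrightarrow> y \<in> cube"
  unfolding seal_rel_eq
proof (induction rule: rtrancl_induct)
  case base then show ?case .
next
  case (step y z)
  then show ?case unfolding sealR_def using tau_cube facet_cube by blast
qed

lemma tau_sinv: "x$i = 1/4 \<Longrightarrow> tau A i x = sinv A i x"
  by (auto simp: tau_def sinv_def vec_eq_iff)

lemma tau_gen: "x$i = -1/4 \<Longrightarrow> tau A i x = gen_s A i x"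
  by (auto simp: tau_def gen_s_def vec_eq_iff)

lemma sealR_orbit: "(x,y) \<in> sealR A \<Longrightarrow> (x,y) \<in> orbit_rel A"
proof -
  assume "(x,y) \<in> sealR A"
  then obtain i pos where "x \<in> facet i pos" "y = tau A i x" unfolding sealR_def by blast
  then show ?thesis
    using orbit_apply[OF Gamma_s(1), of x A i] orbit_apply[OF Gamma_s(2), of x A i]
    by (cases pos) (simp_all add: facet_def tau_sinv tau_gen)
qed

lemma seal_orbit: "(x,y) \<in> seal_rel A \<Longrightarrow> (x,y) \<in> orbit_rel A"
  unfolding seal_rel_eq
proof (induction rule: rtrancl_induct)
  case base then show ?case by (rule orbit_refl)
next
  case (step y z)
  then have "(y,z) \<in> orbit_rel A" using sealR_orbit orbit_sym by blast
  then show ?case using step(3) orbit_trans by blast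
qed

definition fl :: "('n::finite \<Rightarrow> 'n \<Rightarrow> bool) \<Rightarrow> 'n \<Rightarrow> 'n \<Rightarrow> real" where
  "fl A i k = (if k = i then -1 else sgn01 (A i k))"

definition Dm :: "('n::finite \<Rightarrow> 'n \<Rightarrow> bool) \<Rightarrow> 'n set \<Rightarrow> real^'n \<Rightarrow> real^'n" where
  "Dm A B x = (\<chi> k. (\<Prod>i\<in>B. fl A i k) * x$k)"

lemma abs_prod_fl: "\<bar>\<Prod>i\<in>B. fl A i k\<bar> = 1"
  unfolding abs_prod by (rule prod.neutral) (simp add: fl_def abs_sgn01)

lemma Dm_abs: "\<bar>Dm A B x $ k\<bar> = \<bar>x $ k\<bar>"
  by (simp add: Dm_def abs_mult abs_prod_fl)

lemma Dm_insert: "finite B \<Longrightarrow> i \<notin> B \<Longrightarrow> Dm A (insert i B) x = tau A i (Dm A B x)"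
  by (simp add: Dm_def tau_def vec_eq_iff fl_def)

lemma chain:
  assumes "finite B"
  shows "x \<in> cube \<Longrightarrow> (\<forall>i\<in>B. \<bar>x$i\<bar> = 1/4) \<Longrightarrow> (x, Dm A B x) \<in> seal_rel A"
  using assms
proof (induction B rule: finite_induct)
  case empty
  have "Dm A {} x = x" by (simp add: Dm_def vec_eq_iff)
  then show ?case by (simp add: seal_rel_eq)
next
  case (insert i B)
  let ?z = "Dm A B x"
  have xz: "(x, ?z) \<in> seal_rel A" using insert.IH insert.prems by blast
  have zc: "?z \<in> cube" using insert(4) by (simp add: in_cube_abs Dm_abs)
  have "\<bar>?z$i\<bar> = 1/4" using insert(5) Dm_abs[of A B x i] by simp
  then have "?z$i = 1/4 \<or> ?z$i = -1/4" by (simp add: abs_if split: if_splits)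
  then have "?z \<in> facet i (?z$i = 1/4)" using zc unfolding facet_def by auto
  then obtain pos where "?z \<in> facet i pos" by blast
  then have "(?z, tau A i ?z) \<in> sealR A" unfolding sealR_def by blast
  then have "(?z, Dm A (insert i B) x) \<in> sealR A \<union> (sealR A)\<inverse>" using Dm_insert[OF insert(1,2)] by simp
  then show ?case using xz unfolding seal_rel_eq by (rule rtrancl_into_rtrancl[rotated])
qed

lemma coord_arith:
  fixes x e :: real and n :: int
  assumes e: "e = 1 \<or> e = -1" and x: "\<bar>x\<bar> \<le> 1/4" and y: "\<bar>e*x + of_int n / 2\<bar> \<le> 1/4"
  shows "(odd n \<longrightarrow> e*x + of_int n / 2 = -(e*x) \<and> \<bar>x\<bar> = 1/4) \<and> (even n \<longrightarrow> n = 0)"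
proof -
  have "\<bar>e*x\<bar> \<le> 1/4" using e x by auto
  then have "e*x \<le> 1/4" "-(e*x) \<le> 1/4" using abs_le_D1 abs_le_D2 by blast+
  moreover have "e*x + of_int n / 2 \<le> 1/4" "-(e*x + of_int n / 2) \<le> 1/4" using y abs_le_D1 abs_le_D2 by blast+
  ultimately have "of_int n \<le> (1::real)" "-1 \<le> (of_int n :: real)" by linarith+
  then have "n \<le> 1" "-1 \<le> n" by linarith+
  then have n3: "n = -1 \<or> n = 0 \<or> n = 1" by linarith
  note lin = \<open>e*x \<le> 1/4\<close> \<open>-(e*x) \<le> 1/4\<close> \<open>e*x + of_int n / 2 \<le> 1/4\<close> \<open>-(e*x + of_int n / 2) \<le> 1/4\<close>
  have ae: "\<bar>e*x\<bar> = \<bar>x\<bar>" using e by (auto simp: abs_mult)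
  have "odd n \<Longrightarrow> (n = 1 \<and> e*x = -1/4) \<or> (n = -1 \<and> e*x = 1/4)"
  proof -
    assume "odd n"
    then have "n \<noteq> 0" by auto
    then have "n = 1 \<or> n = -1" using n3 by blast
    then show ?thesis using lin by auto
  qed
  moreover have "even n \<Longrightarrow> n = 0" using n3 by auto
  ultimately show ?thesis using ae by auto
qed

lemma prod_fl: "finite S \<Longrightarrow> \<not> A k k \<Longrightarrow> (\<Prod>i\<in>S. fl A i k) = (if k \<in> S then -1 else 1) * (\<Prod>i\<in>S. sgn01 (A i k))"
proof (cases "k \<in> S")
  case True
  assume f: "finite S" and d: "\<not> A k k"
  have "(\<Prod>i\<in>S. fl A i k) = fl A k k * (\<Prod>i\<in>S-{k}. fl A i k)" using f True by (simp add: prod.remove)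
  also have "(\<Prod>i\<in>S-{k}. fl A i k) = (\<Prod>i\<in>S-{k}. sgn01 (A i k))" by (rule prod.cong) (auto simp: fl_def)
  also have "(\<Prod>i\<in>S. sgn01 (A i k)) = sgn01 (A k k) * (\<Prod>i\<in>S-{k}. sgn01 (A i k))" using f True by (simp add: prod.remove)
  ultimately show ?thesis using True d by (simp add: fl_def sgn01_def)
next
  case False
  then show ?thesis by (simp, intro prod.cong) (auto simp: fl_def)
qed

lemma orbit_seal:
  fixes A :: "'n::finite \<Rightarrow> 'n \<Rightarrow> bool"
  assumes d: "\<forall>i. \<not> A i i" and xc: "x \<in> cube" and yc: "y \<in> cube" and o: "(x,y) \<in> orbit_rel A"
  shows "(x,y) \<in> seal_rel A"
proof -
  obtain g where g: "g \<in> Gamma A" "y = g x" using o unfolding orbit_rel_def by blast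
  obtain n where n: "g = aff A n" using Gamma_form[OF d g(1)] by blast
  define S where "S = {i. odd (n i)}"
  have yk: "y$k = Efac A n k * x$k + of_int (n k) / 2" for k using g(2) n by (simp add: aff_def)
  have ca: "(odd (n k) \<longrightarrow> y$k = -(Efac A n k * x$k) \<and> \<bar>x$k\<bar> = 1/4) \<and> (even (n k) \<longrightarrow> n k = 0)" for k
  proof -
    have "\<bar>x$k\<bar> \<le> 1/4" using xc unfolding in_cube_abs by blast
    moreover have "\<bar>Efac A n k * x$k + of_int (n k) / 2\<bar> \<le> 1/4" using yc yk[of k] unfolding in_cube_abs by metis
    ultimately have "(odd (n k) \<longrightarrow> Efac A n k * x$k + of_int (n k) / 2 = -(Efac A n k * x$k) \<and> \<bar>x$k\<bar> = 1/4) \<and> (even (n k) \<longrightarrow> n k = 0)"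
      by (rule coord_arith[OF Efac_cases])
    then show ?thesis unfolding yk[of k, symmetric] .
  qed
  have "y = Dm A S x"
  proof -
    have "y$k = Dm A S x $ k" for k
      using ca[of k] yk[of k] prod_fl[of S A k] d unfolding Dm_def S_def Efac_def by auto
    then show ?thesis by (simp add: vec_eq_iff)
  qed
  moreover have "\<forall>i\<in>S. \<bar>x$i\<bar> = 1/4" using ca unfolding S_def by blast
  ultimately show ?thesis using chain[of S x A] xc by simp
qed

lemma quot_istop: "istopology (\<lambda>U. U \<subseteq> topspace X // r \<and> openin X {x \<in> topspace X. r``{x} \<in> U})"
proof -
  have int: "S \<inter> T \<subseteq> topspace X // r \<and> openin X {x \<in> topspace X. r``{x} \<in> S \<inter> T}"
    if S: "S \<subseteq> topspace X // r \<and> openin X {x \<in> topspace X. r``{x} \<in> S}"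
    and T: "T \<subseteq> topspace X // r \<and> openin X {x \<in> topspace X. r``{x} \<in> T}" for S T
  proof -
    have "{x \<in> topspace X. r``{x} \<in> S \<inter> T} = {x \<in> topspace X. r``{x} \<in> S} \<inter> {x \<in> topspace X. r``{x} \<in> T}"
      by blast
    then show ?thesis using S T by (simp add: openin_Int le_infI1)
  qed
  have uni: "\<Union>K \<subseteq> topspace X // r \<and> openin X {x \<in> topspace X. r``{x} \<in> \<Union>K}"
    if K: "\<forall>U\<in>K. U \<subseteq> topspace X // r \<and> openin X {x \<in> topspace X. r``{x} \<in> U}" for K
  proof -
    have "{x \<in> topspace X. r``{x} \<in> \<Union>K} = \<Union>((\<lambda>U. {x \<in> topspace X. r``{x} \<in> U}) ` K)" by blast
    moreover have "openin X (\<Union>((\<lambda>U. {x \<in> topspace X. r``{x} \<in> U}) ` K))"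
      using K by (intro openin_Union) blast
    ultimately show ?thesis using K by auto
  qed
  show ?thesis unfolding istopology_def using int uni by blast
qed

lemma openin_quot: "openin (quotient_topology X r) U \<longleftrightarrow> U \<subseteq> topspace X // r \<and> openin X {x \<in> topspace X. r``{x} \<in> U}"
  unfolding quotient_topology_def topology_inverse'[OF quot_istop] ..

lemma topspace_quot: "topspace (quotient_topology X r) = topspace X // r"
proof
  show "topspace (quotient_topology X r) \<subseteq> topspace X // r"
    unfolding topspace_def openin_quot by blast
  have "{x \<in> topspace X. r``{x} \<in> topspace X // r} = topspace X" by (auto intro: quotientI)
  then have "openin (quotient_topology X r) (topspace X // r)" unfolding openin_quot by simp
  then show "topspace X // r \<subseteq> topspace (quotient_topology X r)" by (rule openin_subset)
qed

lemma finite_min_eps: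
  assumes "finite I" "\<forall>i\<in>I. \<exists>e>0. Q i e" "\<And>i e e'. 0 < e' \<Longrightarrow> e' \<le> e \<Longrightarrow> Q i e \<Longrightarrow> Q i e'"
  shows "\<exists>e>(0::real). \<forall>i\<in>I. Q i e"
  using assms(1,2)
proof (induction I rule: finite_induct)
  case empty then show ?case by (intro exI[of _ 1]) simp
next
  case (insert i I)
  then obtain e1 where e1: "e1 > 0" "\<forall>j\<in>I. Q j e1" by auto
  obtain e2 where e2: "e2 > 0" "Q i e2" using insert(4) by auto
  have "Q i (min e1 e2)" using assms(3)[of "min e1 e2" e2 i] e1 e2 by simp
  moreover have "Q j (min e1 e2)" if "j \<in> I" for j using assms(3)[of "min e1 e2" e1 j] e1 e2 that by simp
  ultimately have "\<forall>j\<in>insert i I. Q j (min e1 e2)" by blast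
  then show ?case using e1 e2 by (intro exI[of _ "min e1 e2"]) auto
qed

lemma coord_nbhd: "\<exists>d>0. \<forall>y. \<bar>y - t\<bar> < d \<longrightarrow> (\<exists>m::int. \<bar>y - of_int m / 2\<bar> \<le> 1/4 \<and> \<bar>(t::real) - of_int m / 2\<bar> \<le> 1/4)"
proof -
  define a where "a = \<lfloor>2*t + 1/2\<rfloor>"
  have a1: "of_int a \<le> 2*t + 1/2" and a2: "2*t + 1/2 < of_int a + 1" unfolding a_def by linarith+
  show ?thesis
  proof (cases "t - of_int a / 2 = -1/4")
    case True
    show ?thesis
    proof (intro exI[of _ "1/2"] conjI allI impI)
      fix y :: real assume "\<bar>y - t\<bar> < 1/2"
      then have y: "y - t < 1/2" "t - y < 1/2" by linarith+
      show "\<exists>m::int. \<bar>y - of_int m / 2\<bar> \<le> 1/4 \<and> \<bar>t - of_int m / 2\<bar> \<le> 1/4"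
      proof (cases "y \<ge> t")
        case True
        then show ?thesis using y \<open>t - of_int a / 2 = -1/4\<close> by (intro exI[of _ a]) (unfold abs_le_iff, intro conjI; linarith)
      next
        case False
        then show ?thesis using y \<open>t - of_int a / 2 = -1/4\<close> by (intro exI[of _ "a - 1"]) (unfold abs_le_iff of_int_diff of_int_1 diff_divide_distrib, intro conjI; linarith)
      qed
    qed simp
  next
    case False
    let ?d = "t - of_int a / 2"
    have d: "-1/4 < ?d" "?d < 1/4" using a1 a2 False by linarith+
    show ?thesis
    proof (intro exI[of _ "min (?d + 1/4) (1/4 - ?d)"] conjI allI impI)
      fix y :: real assume "\<bar>y - t\<bar> < min (?d + 1/4) (1/4 - ?d)"
      then have y: "y - t < 1/4 - ?d" "t - y < ?d + 1/4" by linarith+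
      show "\<exists>m::int. \<bar>y - of_int m / 2\<bar> \<le> 1/4 \<and> \<bar>t - of_int m / 2\<bar> \<le> 1/4"
        using y d by (intro exI[of _ a]) (unfold abs_le_iff, intro conjI; linarith)
    qed (use d in simp)
  qed
qed

lemma finite_Mp: "finite {m::'n::finite \<Rightarrow> int. \<forall>k. \<bar>p$k - of_int (m k) / 2\<bar> \<le> (1/4::real)}"
proof (rule finite_subset)
  show "{m::'n \<Rightarrow> int. \<forall>k. \<bar>p$k - of_int (m k) / 2\<bar> \<le> (1/4::real)}
    \<subseteq> PiE UNIV (\<lambda>k. {\<lfloor>2 * p$k\<rfloor> - 1 .. \<lfloor>2 * p$k\<rfloor> + 1})"
  proof
    fix m :: "'n \<Rightarrow> int" assume "m \<in> {m. \<forall>k. \<bar>p$k - of_int (m k) / 2\<bar> \<le> (1/4::real)}"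
    then have h: "\<bar>p$k - of_int (m k) / 2\<bar> \<le> 1/4" for k by blast
    have "m k \<in> {\<lfloor>2 * p$k\<rfloor> - 1 .. \<lfloor>2 * p$k\<rfloor> + 1}" for k
    proof -
      have f1: "of_int \<lfloor>2 * p$k\<rfloor> \<le> 2 * p$k" "2 * p$k < of_int \<lfloor>2 * p$k\<rfloor> + 1" by linarith+
      have "p$k - of_int (m k) / 2 \<le> 1/4" "-(p$k - of_int (m k) / 2) \<le> 1/4"
        using abs_le_D1[OF h[of k]] abs_le_D2[OF h[of k]] by auto
      then have "of_int (m k) < (of_int \<lfloor>2 * p$k\<rfloor> + 2 :: real)" "of_int \<lfloor>2 * p$k\<rfloor> - 1 < (of_int (m k) :: real)"
        using f1 by linarith+
      then have "of_int (m k) < (of_int (\<lfloor>2 * p$k\<rfloor> + 2) :: real)" "of_int (\<lfloor>2 * p$k\<rfloor> - 1) < (of_int (m k) :: real)"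
        by simp_all
      then have "m k < \<lfloor>2 * p$k\<rfloor> + 2" "\<lfloor>2 * p$k\<rfloor> - 1 < m k" by (simp_all only: of_int_less_iff)
      then show ?thesis by simp
    qed
    then show "m \<in> PiE UNIV (\<lambda>k. {\<lfloor>2 * p$k\<rfloor> - 1 .. \<lfloor>2 * p$k\<rfloor> + 1})" by (simp add: PiE_iff)
  qed
  show "finite (PiE UNIV (\<lambda>k. {\<lfloor>2 * p$k\<rfloor> - 1 .. \<lfloor>2 * p$k\<rfloor> + 1}))"
    by (rule finite_PiE) simp_all
qed

lemma key_open:
  fixes A :: "'n::finite \<Rightarrow> 'n \<Rightarrow> bool" and W :: "(real^'n) set"
  assumes bott: "bott_matrix A"
    and inv: "\<And>x g. g \<in> Gamma A \<Longrightarrow> (g x \<in> W \<longleftrightarrow> x \<in> W)"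
    and T: "open T" "W \<inter> cube = T \<inter> cube"
  shows "open W"
  unfolding open_dist
proof
  fix p assume pW: "p \<in> W"
  define Mp where "Mp = {m::'n \<Rightarrow> int. \<forall>k. \<bar>p$k - of_int (m k) / 2\<bar> \<le> (1/4::real)}"
  have diag: "\<forall>i. \<not> A i i" using bott_diag[OF bott] by blast
  have step: "\<exists>e>0. \<forall>y. dist y p < e \<longrightarrow> (\<forall>k. \<bar>y$k - of_int (m k) / 2\<bar> \<le> 1/4) \<longrightarrow> y \<in> W"
    if m: "m \<in> Mp" for m
  proof -
    let ?c = "(\<chi> k. of_int (m k) / 2) :: real^'n"
    obtain g where g: "g \<in> Gamma A" "g ?c = 0" using reach_zero[OF bott] by blast
    obtain n where n: "g = aff A n" using Gamma_form[OF diag g(1)] by blast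
    have gc: "g y \<in> cube" if "\<forall>k. \<bar>y$k - of_int (m k) / 2\<bar> \<le> 1/4" for y
    proof -
      have "\<bar>g y $ k\<bar> \<le> 1/4" for k
        using aff_abs[of A n y k ?c] g(2) n that by simp
      then show ?thesis unfolding in_cube_abs by blast
    qed
    have "g p \<in> cube" using gc m unfolding Mp_def by (simp add: abs_minus_commute)
    moreover have "g p \<in> W" using inv[OF g(1)] pW by blast
    ultimately have "g p \<in> T" using T(2) by blast
    then obtain e where e: "e > 0" "\<forall>z. dist z (g p) < e \<longrightarrow> z \<in> T" using T(1) unfolding open_dist by blast
    show ?thesis
    proof (intro exI[of _ e] conjI allI impI)
      fix y assume y: "dist y p < e" "\<forall>k. \<bar>y$k - of_int (m k) / 2\<bar> \<le> 1/4"
      have "dist (g y) (g p) = dist y p" using n aff_dist by metis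
      then have "g y \<in> T" using e y by simp
      moreover have "g y \<in> cube" using gc y by blast
      ultimately have "g y \<in> W" using T(2) by blast
      then show "y \<in> W" using inv[OF g(1)] by blast
    qed (rule e(1))
  qed
  have fin: "finite Mp" unfolding Mp_def by (rule finite_Mp)
  obtain e where e: "e > 0" "\<forall>m\<in>Mp. \<forall>y. dist y p < e \<longrightarrow> (\<forall>k. \<bar>y$k - of_int (m k) / 2\<bar> \<le> 1/4) \<longrightarrow> y \<in> W"
    using finite_min_eps[OF fin, of "\<lambda>m e. \<forall>y. dist y p < e \<longrightarrow> (\<forall>k. \<bar>y$k - of_int (m k) / 2\<bar> \<le> 1/4) \<longrightarrow> y \<in> W"]
      step by fastforce
  obtain d where d: "d > 0" "\<forall>k\<in>UNIV. \<forall>y. \<bar>y - p$k\<bar> < d \<longrightarrow> (\<exists>m::int. \<bar>y - of_int m / 2\<bar> \<le> 1/4 \<and> \<bar>p$k - of_int m / 2\<bar> \<le> 1/4)"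
    using finite_min_eps[of UNIV "\<lambda>k d. \<forall>y. \<bar>y - p$k\<bar> < d \<longrightarrow> (\<exists>m::int. \<bar>y - of_int m / 2\<bar> \<le> 1/4 \<and> \<bar>p$k - of_int m / 2\<bar> \<le> 1/4)"]
      coord_nbhd by fastforce
  show "\<exists>e>0. \<forall>y. dist y p < e \<longrightarrow> y \<in> W"
  proof (intro exI[of _ "min d e"] conjI allI impI)
    fix y assume y: "dist y p < min d e"
    have "\<forall>k. \<exists>m::int. \<bar>y$k - of_int m / 2\<bar> \<le> 1/4 \<and> \<bar>p$k - of_int m / 2\<bar> \<le> 1/4"
    proof
      fix k
      have "\<bar>y$k - p$k\<bar> \<le> dist y p" using dist_vec_nth_le[of y k p] by (simp add: dist_real_def)
      then have "\<bar>y$k - p$k\<bar> < d" using y by simp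
      then show "\<exists>m::int. \<bar>y$k - of_int m / 2\<bar> \<le> 1/4 \<and> \<bar>p$k - of_int m / 2\<bar> \<le> 1/4" using d by blast
    qed
    then obtain m where m: "\<forall>k. \<bar>y$k - of_int (m k) / 2\<bar> \<le> 1/4 \<and> \<bar>p$k - of_int (m k) / 2\<bar> \<le> 1/4"
      by (rule choice[THEN exE]) blast
    have "m \<in> Mp" unfolding Mp_def using m by blast
    then show "y \<in> W" using e y m by auto
  qed (use d e in simp)
qed

theorem mainTheorem10:
  fixes A :: "'n::finite \<Rightarrow> 'n \<Rightarrow> bool"
  assumes "bott_matrix A"
  shows "seal_space A homeomorphic_space M_space A"
proof -
  note bott = assms
  have diag: "\<forall>i. \<not> A i i" using bott_diag[OF bott] by blast
  let ?r = "seal_rel A" and ?O = "orbit_rel A"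
  have tS: "topspace (seal_space A) = cube // ?r"
    unfolding seal_space_def topspace_quot by simp
  have tM: "topspace (M_space A) = UNIV // ?O"
    unfolding M_space_def topspace_quot by simp
  have a: "?r `` {x} = ?O `` {x} \<inter> cube" if "x \<in> cube" for x
    using seal_orbit seal_cube orbit_seal[of A, OF diag] that by blast
  have b: "?O `` (?r `` {x}) = ?O `` {x}" for x
    using seal_orbit orbit_trans rtrancl_refl[of x] unfolding seal_rel_eq by blast
  define f where "f C = ?O `` C" for C :: "(real^'n) set"
  define f' where "f' D = D \<inter> cube" for D :: "(real^'n) set"
  have rep: "\<exists>z\<in>cube. D = ?O `` {z}" if Dq: "D \<in> UNIV // ?O" for D
  proof -
    obtain x where x: "D = ?O `` {x}" using Dq by (auto elim: quotientE)
    obtain g where g: "g \<in> Gamma A" "g x \<in> cube" using into_cube[OF bott] by blast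
    have "?O `` {x} = ?O `` {g x}" by (rule orbit_Image_eq[OF orbit_apply[OF g(1)]])
    then show ?thesis using g x by blast
  qed
  have c1: "continuous_map (seal_space A) (M_space A) f"
    unfolding continuous_map_def
  proof (intro conjI allI impI)
    show "f \<in> topspace (seal_space A) \<rightarrow> topspace (M_space A)"
      unfolding tS tM f_def using b by (auto elim!: quotientE intro: quotientI[OF UNIV_I])
  next
    fix U assume U: "openin (M_space A) U"
    then have oU: "open {x. ?O``{x} \<in> U}" unfolding M_space_def openin_quot by simp
    have "{x \<in> cube. ?r``{x} \<in> {C \<in> cube // ?r. f C \<in> U}} = {x. ?O``{x} \<in> U} \<inter> cube"
      unfolding f_def using b by (auto intro: quotientI)
    then have "openin (subtopology euclidean cube) {x \<in> cube. ?r``{x} \<in> {C \<in> cube // ?r. f C \<in> U}}"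
      using oU by (auto simp: openin_subtopology)
    then show "openin (seal_space A) {C \<in> topspace (seal_space A). f C \<in> U}"
      unfolding tS seal_space_def openin_quot by (simp add: topspace_quot)
  qed
  have c2: "continuous_map (M_space A) (seal_space A) f'"
    unfolding continuous_map_def
  proof (intro conjI allI impI)
    show "f' \<in> topspace (M_space A) \<rightarrow> topspace (seal_space A)"
    proof
      fix D assume "D \<in> topspace (M_space A)"
      then obtain z where z: "z \<in> cube" "D = ?O `` {z}" using rep tM by blast
      then have "f' D = ?r `` {z}" unfolding f'_def using a by simp
      then show "f' D \<in> topspace (seal_space A)" unfolding tS using z by (auto intro: quotientI)
    qed
  next
    fix V assume V: "openin (seal_space A) V"
    then have "openin (subtopology euclidean cube) {x \<in> cube. ?r``{x} \<in> V}"
      unfolding seal_space_def openin_quot by simp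
    then obtain T where T: "open T" "{x \<in> cube. ?r``{x} \<in> V} = T \<inter> cube"
      unfolding openin_subtopology by auto
    define W where "W = {x. ?O``{x} \<inter> cube \<in> V}"
    have "W \<inter> cube = {x \<in> cube. ?r``{x} \<in> V}"
    proof (rule set_eqI)
      fix x show "x \<in> W \<inter> cube \<longleftrightarrow> x \<in> {x \<in> cube. ?r``{x} \<in> V}"
        using a[of x] unfolding W_def by auto
    qed
    then have wc: "W \<inter> cube = T \<inter> cube" using T(2) by simp
    have inv: "g x \<in> W \<longleftrightarrow> x \<in> W" if "g \<in> Gamma A" for g x
      using orbit_Image_eq[OF orbit_apply[OF that, of x]] unfolding W_def by simp
    have "open W" by (rule key_open[of A W T]) (use bott inv T(1) wc in blast)+
    moreover have "{x \<in> UNIV. ?O``{x} \<in> {D \<in> UNIV // ?O. f' D \<in> V}} = W"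
      unfolding W_def f'_def by (auto intro: quotientI)
    ultimately show "openin (M_space A) {D \<in> topspace (M_space A). f' D \<in> V}"
      unfolding tM M_space_def openin_quot by (simp add: topspace_quot)
  qed
  have i1: "f' (f C) = C" if Cq: "C \<in> topspace (seal_space A)" for C
  proof -
    obtain x where x: "x \<in> cube" "C = ?r `` {x}" using Cq unfolding tS by (auto elim: quotientE)
    have "f' (f C) = ?O `` {x} \<inter> cube" unfolding f_def f'_def x(2) b ..
    then show ?thesis using a[OF x(1)] x(2) by simp
  qed
  have i2: "f (f' D) = D" if Dm: "D \<in> topspace (M_space A)" for D
  proof -
    obtain z where z: "z \<in> cube" "D = ?O `` {z}" using rep Dm unfolding tM by blast
    have "f (f' D) = ?O `` (?r `` {z})" unfolding f_def f'_def z(2) a[OF z(1)] ..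
    then show ?thesis using b[of z] z(2) by simp
  qed
  show ?thesis unfolding homeomorphic_space_def homeomorphic_maps_def
    using c1 c2 i1 i2 by blast
qed

end
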